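(* Let $\varphi$ be an $AB\bar B$-formula and let $\mathcal{G}=(\mathbb{P}_N,\mathcal{L})$ be a $\varphi$-compass structure of finite length $N<\omega$ such that $\varphi\in\mathcal{L}(0,y)$ for some $0<y<N$. If there exist rows $0<y_0<y_1<N$ with $Shading_{\mathcal{G}}(y_0)\subseteq Shading_{\mathcal{G}}(y_1)$, then there exists a $\varphi$-compass structure $\mathcal{G}'$ of length $N'<N$ that features $\varphi$.
   Context: $AB\bar B$-formulas are built from propositional variables using $\neg$, $\vee$, and unary modalities $\langle A\rangle,\langle B\rangle,\langle\bar B\rangle$ ($[R]\psi=\neg\langle R\rangle\neg\psi$). The closure $Cl(\varphi)$ is the set of subformulas of $\varphi$ and their negations (identifying $\neg\neg\alpha$ with $\alpha$, $\neg\langle R\rangle\alpha$ with $[R]\neg\alpha$). The extended closure $Cl^+(\varphi)$ is $Cl(\varphi)$ together with all $\langle R\rangle\alpha$ and $\neg\langle R\rangle\alpha$ for $R\in\{A,B,\bar B\}$, $\alpha\in Cl(\varphi)$. A $\varphi$-atom is a nonempty $F\subseteq Cl^+(\varphi)$ such that for every $\alpha\in Cl^+(\varphi)$, $\alpha\in F$ iff $\neg\alpha\notin F$, and for every $\alpha\vee\beta\in Cl^+(\varphi)$, $\alpha\vee\beta\in F$ iff $\alpha\in F$ or $\beta\in F$. For an atom $F$: $obs(F)=\{\alpha\in Cl(\varphi):\alpha\in F\}$ and $Req_R(F)=\{\alpha\in Cl(\varphi):\langle R\rangle\alpha\in F\}$. Define $F\leadsto_A G$ iff $Req_A(F)=obs(G)\cup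 Req_B(G)\cup Req_{\bar B}(G)$; and $F\leadsto_B G$ iff $obs(F)\cup Req_{\bar B}(F)\subseteq Req_{\bar B}(G)\subseteq obs(F)\cup Req_{\bar B}(F)\cup Req_B(F)$ and $obs(G)\cup Req_B(G)\subseteq Req_B(F)\subseteq obs(G)\cup Req_B(G)\cup Req_{\bar B}(G)$. For $N\le\omega$ (identified with $\{0,\dots,N-1\}$), $\mathbb{P}_N=\{(x,y):0\le x<y<N\}$, with relations $(x,y)\,A\,(x',y')$ iff $y=x'$; $(x,y)\,B\,(x',y')$ iff $x=x'$ and $y'<y$; $(x,y)\,\bar B\,(x',y')$ iff $x=x'$ and $y<y'$. A $\varphi$-compass structure of length $N$ is $\mathcal{G}=(\mathbb{P}_N,\mathcal{L})$ with $\mathcal{L}$ mapping points to $\varphi$-atoms such that (consistency) $p\,R\,q$ implies $\mathcal{L}(p)\leadsto_R\mathcal{L}(q)$ for $R\in\{A,B\}$, and (fulfillment) for every $p$, $R\in\{A,B,\bar B\}$, $\alpha\in Req_R(\mathcal{L}(p))$ there is $q$ with $p\,R\,q$ and $\alpha\in obs(\mathcal{L}(q))$. $\mathcal{G}$ features $\alpha$ if $\alpha\in\mathcal{L}(p)$ for some point $p$. The shading of row $y$ is $Shading_{\mathcal{G}}(y)=\{\mathcal{L}(x,y):0\le x<y\}$. *)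

theory Defs
  imports Main
begin

datatype rel = RA | RB | RBbar

datatype 'p fm = Var 'p | Neg "'p fm" | Or "'p fm" "'p fm" | Dia rel "'p fm"

text \<open>Formulas are taken modulo the identification of double negations with their body.
  Canonical representatives are formulas without double negations; dnorm computes them.\<close>

fun nneg :: "'p fm \<Rightarrow> 'p fm" where
  "nneg (Neg a) = a"
| "nneg a = Neg a"

fun dnorm :: "'p fm \<Rightarrow> 'p fm" where
  "dnorm (Var p) = Var p"
| "dnorm (Neg a) = nneg (dnorm a)"
| "dnorm (Or a b) = Or (dnorm a) (dnorm b)"
| "dnorm (Dia r a) = Dia r (dnorm a)"

fun subf :: "'p fm \<Rightarrow> 'p fm set" where
  "subf (Var p) = {Var p}"
| "subf (Neg a) = insert (Neg a) (subf a)"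
| "subf (Or a b) = insert (Or a b) (subf a \<union> subf b)"
| "subf (Dia r a) = insert (Dia r a) (subf a)"

definition Cl :: "'p fm \<Rightarrow> 'p fm set" where
  "Cl \<phi> = subf (dnorm \<phi>) \<union> nneg ` subf (dnorm \<phi>)"

definition ClPlus :: "'p fm \<Rightarrow> 'p fm set" where
  "ClPlus \<phi> = Cl \<phi> \<union> {Dia r a | r a. a \<in> Cl \<phi>} \<union> {Neg (Dia r a) | r a. a \<in> Cl \<phi>}"

definition is_atom :: "'p fm \<Rightarrow> 'p fm set \<Rightarrow> bool" where
  "is_atom \<phi> F \<longleftrightarrow> F \<noteq> {} \<and> F \<subseteq> ClPlus \<phi>
     \<and> (\<forall>a \<in> ClPlus \<phi>. a \<in> F \<longleftrightarrow> nneg a \<notin> F)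
     \<and> (\<forall>a b. Or a b \<in> ClPlus \<phi> \<longrightarrow> (Or a b \<in> F \<longleftrightarrow> a \<in> F \<or> b \<in> F))"

definition obs :: "'p fm \<Rightarrow> 'p fm set \<Rightarrow> 'p fm set" where
  "obs \<phi> F = {a \<in> Cl \<phi>. a \<in> F}"

definition Req :: "'p fm \<Rightarrow> rel \<Rightarrow> 'p fm set \<Rightarrow> 'p fm set" where
  "Req \<phi> r F = {a \<in> Cl \<phi>. Dia r a \<in> F}"

definition leadsto_A :: "'p fm \<Rightarrow> 'p fm set \<Rightarrow> 'p fm set \<Rightarrow> bool" where
  "leadsto_A \<phi> F G \<longleftrightarrow> Req \<phi> RA F = obs \<phi> G \<union> Req \<phi> RB G \<union> Req \<phi> RBbar G"

definition leadsto_B :: "'p fm \<Rightarrow> 'p fm set \<Rightarrow> 'p fm set \<Rightarrow> bool" where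
  "leadsto_B \<phi> F G \<longleftrightarrow>
     obs \<phi> F \<union> Req \<phi> RBbar F \<subseteq> Req \<phi> RBbar G
   \<and> Req \<phi> RBbar G \<subseteq> obs \<phi> F \<union> Req \<phi> RBbar F \<union> Req \<phi> RB F
   \<and> obs \<phi> G \<union> Req \<phi> RB G \<subseteq> Req \<phi> RB F
   \<and> Req \<phi> RB F \<subseteq> obs \<phi> G \<union> Req \<phi> RB G \<union> Req \<phi> RBbar G"

definition PN :: "nat \<Rightarrow> (nat \<times> nat) set" where
  "PN N = {(x, y). x < y \<and> y < N}"

fun interval_rel :: "rel \<Rightarrow> nat \<times> nat \<Rightarrow> nat \<times> nat \<Rightarrow> bool" where
  "interval_rel RA (x, y) (x', y') \<longleftrightarrow> y = x'"
| "interval_rel RB (x, y) (x', y') \<longleftrightarrow> x = x' \<and> y' < y"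
| "interval_rel RBbar (x, y) (x', y') \<longleftrightarrow> x = x' \<and> y < y'"

definition compass :: "'p fm \<Rightarrow> nat \<Rightarrow> (nat \<times> nat \<Rightarrow> 'p fm set) \<Rightarrow> bool" where
  "compass \<phi> N L \<longleftrightarrow>
     (\<forall>p \<in> PN N. is_atom \<phi> (L p))
   \<and> (\<forall>p \<in> PN N. \<forall>q \<in> PN N. interval_rel RA p q \<longrightarrow> leadsto_A \<phi> (L p) (L q))
   \<and> (\<forall>p \<in> PN N. \<forall>q \<in> PN N. interval_rel RB p q \<longrightarrow> leadsto_B \<phi> (L p) (L q))
   \<and> (\<forall>p \<in> PN N. \<forall>r. \<forall>a \<in> Req \<phi> r (L p).
        \<exists>q \<in> PN N. interval_rel r p q \<and> a \<in> obs \<phi> (L q))"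

definition features :: "nat \<Rightarrow> (nat \<times> nat \<Rightarrow> 'p fm set) \<Rightarrow> 'p fm \<Rightarrow> bool" where
  "features N L \<psi> \<longleftrightarrow> (\<exists>p \<in> PN N. dnorm \<psi> \<in> L p)"

definition shading :: "(nat \<times> nat \<Rightarrow> 'p fm set) \<Rightarrow> nat \<Rightarrow> 'p fm set set" where
  "shading L y = {L (x, y) | x. x < y}"

end

theory Submission
  imports Defs
begin

definition TT :: "'p fm \<Rightarrow> 'p fm set \<Rightarrow> 'p fm set" where
  "TT \<phi> F = obs \<phi> F \<union> Req \<phi> RB F \<union> Req \<phi> RBbar F"

lemma compassI:
  assumes at: "\<And>x y. x<y \<Longrightarrow> y<N \<Longrightarrow> is_atom \<phi> (L(x,y))"
  and A: "\<And>x y e. x<y \<Longrightarrow> y<e \<Longrightarrow> e<N \<Longrightarrow> leadsto_A \<phi> (L(x,y)) (L(y,e))"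
  and B: "\<And>x y e. x<e \<Longrightarrow> e<y \<Longrightarrow> y<N \<Longrightarrow> leadsto_B \<phi> (L(x,y)) (L(x,e))"
  and FA: "\<And>x y a. x<y \<Longrightarrow> y<N \<Longrightarrow> a\<in>Req \<phi> RA (L(x,y)) \<Longrightarrow> \<exists>e. y<e \<and> e<N \<and> a\<in>obs \<phi> (L(y,e))"
  and FB: "\<And>x y a. x<y \<Longrightarrow> y<N \<Longrightarrow> a\<in>Req \<phi> RB (L(x,y)) \<Longrightarrow> \<exists>e. x<e \<and> e<y \<and> a\<in>obs \<phi> (L(x,e))"
  and FBb: "\<And>x y a. x<y \<Longrightarrow> y<N \<Longrightarrow> a\<in>Req \<phi> RBbar (L(x,y)) \<Longrightarrow> \<exists>e. y<e \<and> e<N \<and> a\<in>obs \<phi> (L(x,e))"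
  shows "compass \<phi> N L"
  unfolding compass_def
proof (intro conjI ballI allI impI)
  fix p assume "p \<in> PN N" then show "is_atom \<phi> (L p)" using at by (cases p) (auto simp: PN_def)
next
  fix p q assume "p \<in> PN N" "q \<in> PN N" "interval_rel RA p q"
  then show "leadsto_A \<phi> (L p) (L q)" using A by (cases p; cases q) (auto simp: PN_def)
next
  fix p q assume "p \<in> PN N" "q \<in> PN N" "interval_rel RB p q"
  then show "leadsto_B \<phi> (L p) (L q)" using B by (cases p; cases q) (auto simp: PN_def)
next
  fix p r a assume p: "p \<in> PN N" and a: "a \<in> Req \<phi> r (L p)"
  obtain x y where pe: "p = (x,y)" by (cases p)
  have xy: "x<y" "y<N" using p pe by (auto simp: PN_def)
  show "\<exists>q\<in>PN N. interval_rel r p q \<and> a \<in> obs \<phi> (L q)"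
  proof (cases r)
    case RA
    then obtain e where "y<e" "e<N" "a\<in>obs \<phi> (L(y,e))" using FA[OF xy] a pe by auto
    then show ?thesis using RA pe xy by (intro bexI[of _ "(y,e)"]) (auto simp: PN_def)
  next
    case RB
    then obtain e where "x<e" "e<y" "a\<in>obs \<phi> (L(x,e))" using FB[OF xy] a pe by auto
    then show ?thesis using RB pe xy by (intro bexI[of _ "(x,e)"]) (auto simp: PN_def)
  next
    case RBbar
    then obtain e where "y<e" "e<N" "a\<in>obs \<phi> (L(x,e))" using FBb[OF xy] a pe by auto
    then show ?thesis using RBbar pe xy by (intro bexI[of _ "(x,e)"]) (auto simp: PN_def)
  qed
qed

context
  fixes \<phi> :: "'p fm" and N :: nat and L :: "nat \<times> nat \<Rightarrow> 'p fm set"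
  assumes C: "compass \<phi> N L"
begin

lemma c_at: "x<y \<Longrightarrow> y<N \<Longrightarrow> is_atom \<phi> (L(x,y))"
  using C by (auto simp: compass_def PN_def)

lemma c_A: "x<y \<Longrightarrow> y<e \<Longrightarrow> e<N \<Longrightarrow> leadsto_A \<phi> (L(x,y)) (L(y,e))"
  using C unfolding compass_def PN_def by fastforce

lemma c_B: "x<e \<Longrightarrow> e<y \<Longrightarrow> y<N \<Longrightarrow> leadsto_B \<phi> (L(x,y)) (L(x,e))"
  using C unfolding compass_def PN_def by fastforce

lemma c_F: "x<y \<Longrightarrow> y<N \<Longrightarrow> a\<in>Req \<phi> r (L(x,y)) \<Longrightarrow> \<exists>q\<in>PN N. interval_rel r (x,y) q \<and> a\<in>obs \<phi> (L q)"
  using C unfolding compass_def by (auto simp: PN_def)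

lemma c_FA: "x<y \<Longrightarrow> y<N \<Longrightarrow> a\<in>Req \<phi> RA (L(x,y)) \<Longrightarrow> \<exists>e. y<e \<and> e<N \<and> a\<in>obs \<phi> (L(y,e))"
  using c_F[of x y a RA] by (auto simp: PN_def)

lemma c_FB: "x<y \<Longrightarrow> y<N \<Longrightarrow> a\<in>Req \<phi> RB (L(x,y)) \<Longrightarrow> \<exists>e. x<e \<and> e<y \<and> a\<in>obs \<phi> (L(x,e))"
  using c_F[of x y a RB] by (auto simp: PN_def)

lemma c_FBb: "x<y \<Longrightarrow> y<N \<Longrightarrow> a\<in>Req \<phi> RBbar (L(x,y)) \<Longrightarrow> \<exists>e. y<e \<and> e<N \<and> a\<in>obs \<phi> (L(x,e))"
  using c_F[of x y a RBbar] by (auto simp: PN_def)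

end

lemma leadsto_B_trans: "leadsto_B \<phi> F G \<Longrightarrow> leadsto_B \<phi> G H \<Longrightarrow> leadsto_B \<phi> F H"
  unfolding leadsto_B_def by blast

lemma leadsto_B_TT: "leadsto_B \<phi> F G \<Longrightarrow> TT \<phi> F = TT \<phi> G"
  unfolding leadsto_B_def TT_def by blast

lemma leadsto_A_TT: "leadsto_A \<phi> F G \<Longrightarrow> TT \<phi> G = TT \<phi> G' \<Longrightarrow> leadsto_A \<phi> F G'"
  unfolding leadsto_A_def TT_def by simp

lemma c_colT:
  assumes "compass \<phi> N L" "a<b" "b<N" "a<b'" "b'<N"
  shows "TT \<phi> (L(a,b)) = TT \<phi> (L(a,b'))"
proof -
  consider "b = b'" | "b' < b" | "b < b'" by linarith
  then show ?thesis
    by cases (use assms c_B[OF assms(1)] leadsto_B_TT in \<open>metis\<close>)+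
qed


lemma subf_self: "a \<in> subf a"
  by (cases a) auto

locale contr =
  fixes \<phi> :: "'p fm" and N y0 y1 :: nat and L :: "nat \<times> nat \<Rightarrow> 'p fm set"
  assumes C: "compass \<phi> N L" and y01: "y0 < y1" and y1N: "y1 < N"
    and sh: "shading L y0 \<subseteq> shading L y1"
begin

definition c :: "nat \<Rightarrow> nat" where
  "c x = (if x < y0 then (SOME x'. x' < y1 \<and> L(x',y1) = L(x,y0)) else x + (y1 - y0))"

definition L' :: "nat \<times> nat \<Rightarrow> 'p fm set" where
  "L' p = (if snd p \<le> y0 then L p else L (c (fst p), snd p + (y1 - y0)))"

definition N' :: nat where "N' = N - (y1 - y0)"

lemma c_low: assumes "x < y0" shows "c x < y1" "L(c x, y1) = L(x,y0)"
proof -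
  have "L(x,y0) \<in> shading L y1" using sh assms by (auto simp: shading_def)
  then have "\<exists>x'. x' < y1 \<and> L(x',y1) = L(x,y0)" by (auto simp: shading_def)
  from someI_ex[OF this] show "c x < y1" "L(c x, y1) = L(x,y0)" using assms by (auto simp: c_def)
qed

lemma c_high: "\<not> x < y0 \<Longrightarrow> c x = x + (y1 - y0)"
  by (simp add: c_def)

lemma L'_low: "y \<le> y0 \<Longrightarrow> L'(x,y) = L(x,y)" by (simp add: L'_def)
lemma L'_high: "y0 < y \<Longrightarrow> L'(x,y) = L(c x, y + (y1 - y0))" by (simp add: L'_def)

lemma c_lt: "x < y \<Longrightarrow> y0 < y \<Longrightarrow> c x < y + (y1 - y0)"
  using c_low[of x] c_high[of x] y01 by (cases "x < y0") auto

lemma N'_props: "N' < N" "y0 < N'" using y01 y1N by (auto simp: N'_def)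

lemma n_at: "x<y \<Longrightarrow> y<N' \<Longrightarrow> is_atom \<phi> (L'(x,y))"
proof -
  assume a: "x<y" "y<N'"
  show ?thesis
  proof (cases "y \<le> y0")
    case True then show ?thesis using a c_at[OF C, of x y] N'_props by (simp add: L'_low)
  next
    case False then show ?thesis using a c_at[OF C, of "c x" "y + (y1-y0)"] c_lt[of x y]
      by (simp add: L'_high N'_def)
  qed
qed

lemma n_A: assumes a: "x<y" "y<e" "e<N'" shows "leadsto_A \<phi> (L'(x,y)) (L'(y,e))"
proof -
  have N: "e + (y1 - y0) < N" using a by (simp add: N'_def)
  consider "e \<le> y0" | "y < y0" "y0 < e" | "y = y0" "y0 < e" | "y0 < y" by linarith
  then show ?thesis
  proof cases
    case 1 then show ?thesis using a c_A[OF C, of x y e] y1N y01 by (simp add: L'_low)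
  next
    case 2
    have "leadsto_A \<phi> (L(x,y)) (L(y,y0))" using c_A[OF C, of x y y0] a 2 y01 y1N by simp
    moreover have "TT \<phi> (L(y,y0)) = TT \<phi> (L(c y, e + (y1-y0)))"
      using c_low[of y] 2 c_colT[OF C, of "c y" y1 "e + (y1-y0)"] N y01 by simp
    ultimately show ?thesis using 2 a by (simp add: L'_low L'_high leadsto_A_TT)
  next
    case 3
    then show ?thesis using a c_low[of x] c_high[of y0] c_A[OF C, of "c x" y1 "e + (y1-y0)"] N y01
      by (simp add: L'_low L'_high)
  next
    case 4
    then show ?thesis using a c_lt[of x y] c_high[of y] c_A[OF C, of "c x" "y + (y1-y0)" "e + (y1-y0)"] N
      by (simp add: L'_high)
  qed
qed

lemma n_B: assumes a: "x<e" "e<y" "y<N'" shows "leadsto_B \<phi> (L'(x,y)) (L'(x,e))"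
proof -
  have N: "y + (y1 - y0) < N" using a by (simp add: N'_def)
  consider "y \<le> y0" | "y0 < e" | "e \<le> y0" "y0 < y" by linarith
  then show ?thesis
  proof cases
    case 1 then show ?thesis using a c_B[OF C, of x e y] y1N y01 by (simp add: L'_low)
  next
    case 2 then show ?thesis using a c_lt[of x e] c_B[OF C, of "c x" "e + (y1-y0)" "y + (y1-y0)"] N
      by (simp add: L'_high)
  next
    case 3
    then have x: "x < y0" using a by simp
    have 1: "leadsto_B \<phi> (L(c x, y + (y1-y0))) (L(x,y0))"
      using c_low[OF x] c_B[OF C, of "c x" y1 "y + (y1-y0)"] N 3 y01 by simp
    show ?thesis
    proof (cases "e = y0")
      case True then show ?thesis using 1 3 by (simp add: L'_low L'_high)
    next
      case False
      then have "leadsto_B \<phi> (L(x,y0)) (L(x,e))" using c_B[OF C, of x e y0] a 3 y01 y1N by simp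
      then show ?thesis using 1 3 leadsto_B_trans by (simp add: L'_low L'_high) blast
    qed
  qed
qed

lemma n_FB: assumes a: "x<y" "y<N'" and al: "al \<in> Req \<phi> RB (L'(x,y))"
  shows "\<exists>e. x<e \<and> e<y \<and> al\<in>obs \<phi> (L'(x,e))"
proof (cases "y \<le> y0")
  case True
  then obtain e where "x<e" "e<y" "al \<in> obs \<phi> (L(x,e))"
    using c_FB[OF C, of x y al] a al y01 y1N by (auto simp: L'_low)
  then show ?thesis using True by (intro exI[of _ e]) (simp add: L'_low)
next
  case False
  have N: "y + (y1 - y0) < N" using a by (simp add: N'_def)
  obtain z where z: "c x < z" "z < y + (y1-y0)" "al \<in> obs \<phi> (L(c x, z))"
    using c_FB[OF C, of "c x" "y + (y1-y0)" al] a al False c_lt[of x y] N by (auto simp: L'_high)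
  show ?thesis
  proof (cases "y1 < z")
    case True
    have "x < z - (y1 - y0)" using c_low[of x] c_high[of x] True z y01 by (cases "x < y0") auto
    then show ?thesis using True z y01 by (intro exI[of _ "z - (y1-y0)"]) (simp add: L'_high)
  next
    case zl: False
    have x: "x < y0" using c_high[of x] z zl y01 by (cases "x < y0") auto
    show ?thesis
    proof (cases "z = y1")
      case True then show ?thesis using x z c_low[OF x] False
        by (intro exI[of _ y0]) (simp add: L'_low)
    next
      case False
      have "leadsto_B \<phi> (L(c x, y1)) (L(c x, z))" using c_B[OF C, of "c x" z y1] z zl False y1N by simp
      then have "al \<in> Req \<phi> RB (L(x,y0))" using z c_low[OF x] unfolding leadsto_B_def by auto
      then obtain e where "x<e" "e<y0" "al \<in> obs \<phi> (L(x,e))"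
        using c_FB[OF C, of x y0 al] x y01 y1N by auto
      then show ?thesis using \<open>\<not> y \<le> y0\<close> by (intro exI[of _ e]) (simp add: L'_low)
    qed
  qed
qed

lemma n_FBb: assumes a: "x<y" "y<N'" and al: "al \<in> Req \<phi> RBbar (L'(x,y))"
  shows "\<exists>e. y<e \<and> e<N' \<and> al\<in>obs \<phi> (L'(x,e))"
proof -
  have hi: "\<exists>e. y0<e \<and> e<N' \<and> al\<in>obs \<phi> (L'(x,e))"
    if x: "x < y0" and r: "al \<in> Req \<phi> RBbar (L(x,y0))"
  proof -
    obtain z where z: "y1 < z" "z < N" "al \<in> obs \<phi> (L(c x, z))"
      using c_FBb[OF C, of "c x" y1 al] c_low[OF x] r y1N by auto
    then show ?thesis using y01 by (intro exI[of _ "z - (y1-y0)"]) (auto simp: L'_high N'_def)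
  qed
  consider "y0 < y" | "y = y0" | "y < y0" by linarith
  then show ?thesis
  proof cases
    case 1
    have N: "y + (y1 - y0) < N" using a by (simp add: N'_def)
    obtain z where z: "y + (y1-y0) < z" "z < N" "al \<in> obs \<phi> (L(c x, z))"
      using c_FBb[OF C, of "c x" "y + (y1-y0)" al] a al 1 c_lt[of x y] N by (auto simp: L'_high)
    then show ?thesis using 1 y01 by (intro exI[of _ "z - (y1-y0)"]) (auto simp: L'_high N'_def)
  next
    case 2 then show ?thesis using hi a al by (simp add: L'_low)
  next
    case 3
    obtain z where z: "y < z" "z < N" "al \<in> obs \<phi> (L(x,z))"
      using c_FBb[OF C, of x y al] a al 3 y01 y1N by (auto simp: L'_low)
    show ?thesis
    proof (cases "z \<le> y0")
      case True then show ?thesis using z N'_props by (intro exI[of _ z]) (simp add: L'_low)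
    next
      case False
      have "leadsto_B \<phi> (L(x,z)) (L(x,y0))" using c_B[OF C, of x y0 z] a 3 z False by simp
      then have "al \<in> Req \<phi> RBbar (L(x,y0))" using z unfolding leadsto_B_def by auto
      then obtain e where "y0<e" "e<N'" "al\<in>obs \<phi> (L'(x,e))" using hi a 3 by auto
      then show ?thesis using 3 by (intro exI[of _ e]) simp
    qed
  qed
qed

lemma n_FA: assumes a: "x<y" "y<N'" and al: "al \<in> Req \<phi> RA (L'(x,y))"
  shows "\<exists>e. y<e \<and> e<N' \<and> al\<in>obs \<phi> (L'(y,e))"
proof (cases "Suc y < N'")
  case True
  have "al \<in> TT \<phi> (L'(y, Suc y))" using n_A[of x y "Suc y"] a True al
    unfolding leadsto_A_def TT_def by simp
  then consider "al \<in> obs \<phi> (L'(y, Suc y))" | "al \<in> Req \<phi> RB (L'(y, Suc y))"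
    | "al \<in> Req \<phi> RBbar (L'(y, Suc y))" unfolding TT_def by blast
  then show ?thesis
  proof cases
    case 1 then show ?thesis using True by blast
  next
    case 2 then show ?thesis using n_FB[of y "Suc y" al] True by auto
  next
    case 3 then obtain e where "Suc y < e" "e < N'" "al\<in>obs \<phi> (L'(y,e))"
      using n_FBb[of y "Suc y" al] True by auto
    then show ?thesis by (intro exI[of _ e]) simp
  qed
next
  case False
  have "\<exists>u. u < N - 1 \<and> L'(x,y) = L(u, N - 1)"
  proof (cases "y \<le> y0")
    case True
    then have e: "y = y0" "y1 = N - 1" "x < y0" using False a N'_props y01 y1N by (auto simp: N'_def)
    have "L'(x,y) = L(c x, y1)" using L'_low[of y x] True c_low[of x] e by simp
    then show ?thesis using c_low[of x] e by (intro exI[of _ "c x"]) simp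
  next
    case F: False
    then have "y + (y1 - y0) = N - 1" using False a y01 y1N by (auto simp: N'_def)
    then show ?thesis using c_lt[of x y] F a by (intro exI[of _ "c x"]) (simp add: L'_high)
  qed
  then obtain u where "u < N - 1" "L'(x,y) = L(u, N - 1)" by blast
  then show ?thesis using c_FA[OF C, of u "N - 1" al] al by auto
qed

lemma n_compass: "compass \<phi> N' L'"
  by (rule compassI) (auto intro: n_at n_A n_B n_FA n_FB n_FBb)

end

theorem lemma2:
  fixes \<phi> :: "'p fm" and N y y0 y1 :: nat and L :: "nat \<times> nat \<Rightarrow> 'p fm set"
  assumes "compass \<phi> N L"
    and "0 < y" and "y < N" and "dnorm \<phi> \<in> L (0, y)"
    and "0 < y0" and "y0 < y1" and "y1 < N"
    and "shading L y0 \<subseteq> shading L y1"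
  shows "\<exists>N' L'. N' < N \<and> compass \<phi> N' (L' :: nat \<times> nat \<Rightarrow> 'p fm set) \<and> features N' L' \<phi>"
proof -
  interpret contr \<phi> N y0 y1 L using assms by unfold_locales auto
  have dc: "dnorm \<phi> \<in> Cl \<phi>" by (simp add: Cl_def subf_self)
  have "features N' L' \<phi>"
  proof (cases "y \<le> y0")
    case True
    then show ?thesis using assms N'_props unfolding features_def
      by (intro bexI[of _ "(0,y)"]) (auto simp: PN_def L'_low)
  next
    case False
    have "leadsto_B \<phi> (L(0,y)) (L(0,y0))" using c_B[OF assms(1), of 0 y0 y] False assms by simp
    then have "dnorm \<phi> \<in> Req \<phi> RBbar (L'(0,y0))" using assms dc
      unfolding leadsto_B_def obs_def by (auto simp: L'_low)
    then obtain e where "y0<e" "e<N'" "dnorm \<phi> \<in> obs \<phi> (L'(0,e))"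
      using n_FBb[of 0 y0] assms N'_props by auto
    then show ?thesis unfolding features_def obs_def
      by (intro bexI[of _ "(0,e)"]) (auto simp: PN_def)
  qed
  then show ?thesis using N'_props n_compass by blast
qed

end
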